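(* Let $\pi$ be a (not necessarily unique) QSD of $(X_t)_{0\le t<\tau_\partial}$, $\lambda=\lambda(\pi)$, and assume the combined Dobrushin and reverse Dobrushin condition (DRD) holds with set $A$, constants $c_0,c_1>0$ and times $t_0,t_1>0$. Define $t_3:=t_0+t_1$ and $c_3:=\lambda^{t_0}c_0c_1/\pi(A)$. Then $$\frac{P_{t_3}(x,\cdot)}{P_{t_3}1(x)}\ge c_3\,\pi(\cdot)\quad\text{for every }x\in\chi .$$
   Context: $\chi$ is a metric space with Borel $\sigma$-algebra; $\partial\notin\chi$ is a cemetery point. $(X_t)_{0\le t<\tau_\partial}$ is a killed Markov process on $\chi$ in discrete or continuous time, absorption time $\tau_\partial=\inf\{t\ge0:X_t=\partial\}$, submarkovian semigroup $P_t(x,A)=\mathbb P_x(X_t\in A,\tau_\partial>t)$; $K1(x)=K(x,\chi)$ for a kernel $K$. A QSD is a probability measure $\pi$ with $\mathbb P_\pi(X_t\in\cdot\mid\tau_\partial>t)=\pi$ for all $t$; $\lambda(\pi):=\mathbb P_\pi(\tau_\partial>1)$. Reverse Dobrushin condition (RD): there exist $t_0>0$ and a submarkovian kernel $R$ with $\pi(dx)P_{t_0}(x,dy)=\pi(dy)R(y,dx)$ as measures on $\chi\times\chi$, and $c_0>0$, $\nu\in\mathcal P(\chi)$ with $R(y,\cdot)/R1(y)\ge c_0\nu(\cdot)$ for $\pi$-a.e. $y$. Condition (DRD): there are a Borel set $A\subseteq\chi$, a probability measure $\nu_1$ with $\nu_1(\chi\setminus A)=0$, $c_1>0$ and $t_1>0$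 such that $P_{t_1}1(x)>0$ for all $x$ and $P_{t_1}(x,\cdot)/P_{t_1}1(x)\ge c_1\nu_1(\cdot)$ for all $x\in\chi$ (this forces $\pi(A)>0$); and (RD) holds with $\nu:=\pi|_A/\pi(A)$ and some $c_0>0$, $t_0>0$. *)

theory Defs
  imports "HOL-Probability.Probability"
begin

text \<open>A submarkovian semigroup (P_t) on the Borel space of a metric space, in discrete time
  (T = natural numbers viewed as reals) or continuous time (T = [0,oo)).
  P t x is the subprobability measure A \<mapsto> P_x(X_t \<in> A, tau > t).\<close>
definition subMarkov_semigroup ::
  "real set \<Rightarrow> (real \<Rightarrow> 'a::metric_space \<Rightarrow> 'a measure) \<Rightarrow> bool" where
  "subMarkov_semigroup T P \<longleftrightarrow>
     (T = range (of_nat :: nat \<Rightarrow> real) \<or> T = {0..}) \<and>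
     (\<forall>t\<in>T. P t \<in> borel \<rightarrow>\<^sub>M subprob_algebra borel) \<and>
     (\<forall>x. P 0 x = return borel x) \<and>
     (\<forall>s\<in>T. \<forall>t\<in>T. \<forall>x. \<forall>B\<in>sets borel.
        emeasure (P (s + t) x) B = (\<integral>\<^sup>+ y. emeasure (P t y) B \<partial>(P s x)))"

definition Pdist :: "(real \<Rightarrow> 'a::metric_space \<Rightarrow> 'a measure) \<Rightarrow> 'a measure \<Rightarrow> real \<Rightarrow> 'a set \<Rightarrow> real" where
  "Pdist P \<mu> t B = (\<integral> x. measure (P t x) B \<partial>\<mu>)"

definition is_QSD ::
  "real set \<Rightarrow> (real \<Rightarrow> 'a::metric_space \<Rightarrow> 'a measure) \<Rightarrow> 'a measure \<Rightarrow> bool" where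
  "is_QSD T P \<pi> \<longleftrightarrow> prob_space \<pi> \<and> sets \<pi> = sets borel \<and>
     (\<forall>t\<in>T. Pdist P \<pi> t UNIV > 0 \<and>
        (\<forall>B\<in>sets borel. Pdist P \<pi> t B / Pdist P \<pi> t UNIV = measure \<pi> B))"

definition surv_rate ::
  "(real \<Rightarrow> 'a::metric_space \<Rightarrow> 'a measure) \<Rightarrow> 'a measure \<Rightarrow> real" where
  "surv_rate P \<pi> = Pdist P \<pi> 1 UNIV"

definition reverse_Dobrushin ::
  "real set \<Rightarrow> (real \<Rightarrow> 'a::metric_space \<Rightarrow> 'a measure) \<Rightarrow> 'a measure \<Rightarrow> real \<Rightarrow> real
     \<Rightarrow> 'a measure \<Rightarrow> bool" where
  "reverse_Dobrushin T P \<pi> t0 c0 \<nu> \<longleftrightarrow>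
     t0 \<in> T \<and> t0 > 0 \<and> c0 > 0 \<and> prob_space \<nu> \<and> sets \<nu> = sets borel \<and>
     (\<exists>R. R \<in> borel \<rightarrow>\<^sub>M subprob_algebra borel \<and>
        (\<forall>C\<in>sets (borel \<Otimes>\<^sub>M borel).
           (\<integral>\<^sup>+ x. \<integral>\<^sup>+ y. indicator C (x, y) \<partial>(P t0 x) \<partial>\<pi>)
         = (\<integral>\<^sup>+ y. \<integral>\<^sup>+ x. indicator C (x, y) \<partial>(R y) \<partial>\<pi>)) \<and>
        (AE y in \<pi>. \<forall>B\<in>sets borel.
           measure (R y) B / measure (R y) UNIV \<ge> c0 * measure \<nu> B))"

end

theory Submission
  imports Defs
begin

locale qs =
  fixes T :: "real set" and P :: "real \<Rightarrow> 'a::metric_space \<Rightarrow> 'a measure" and \<pi> :: "'a measure"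
  assumes semigroup: "subMarkov_semigroup T P"
    and qsd: "is_QSD T P \<pi>"
begin

lemma T_cases: "T = range (of_nat :: nat \<Rightarrow> real) \<or> T = {0..}"
  using semigroup unfolding subMarkov_semigroup_def by blast

lemma zero_T: "0 \<in> T" using T_cases by (metis atLeast_iff order_refl of_nat_0 rangeI)
lemma one_T: "1 \<in> T" using T_cases by (metis atLeast_iff zero_le_one of_nat_1 rangeI)
lemma add_T: "s \<in> T \<Longrightarrow> t \<in> T \<Longrightarrow> s + t \<in> T"
  using T_cases by (auto, metis of_nat_add rangeI)
lemma nonneg_T: "t \<in> T \<Longrightarrow> 0 \<le> t" using T_cases by auto
lemma nat_T: "real n \<in> T" using T_cases by auto

lemma kern: "t \<in> T \<Longrightarrow> P t \<in> borel \<rightarrow>\<^sub>M subprob_algebra borel"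
  using semigroup unfolding subMarkov_semigroup_def by blast

lemma sets_P: "t \<in> T \<Longrightarrow> sets (P t x) = sets borel"
  using subprob_measurableD(2)[OF kern] by simp
lemma space_P: "t \<in> T \<Longrightarrow> space (P t x) = UNIV"
  using subprob_measurableD(1)[OF kern] by simp
lemma subprob_P: "t \<in> T \<Longrightarrow> subprob_space (P t x)"
  using measurable_space[OF kern] by (simp add: space_subprob_algebra)
lemma emeasure_P: "t \<in> T \<Longrightarrow> emeasure (P t x) B = ennreal (measure (P t x) B)"
  using subprob_P by (simp add: subprob_space.emeasure_subprob_space_less_top emeasure_eq_ennreal_measure)
lemma measure_P_le: "t \<in> T \<Longrightarrow> measure (P t x) B \<le> 1"
  using subprob_P subprob_space.subprob_measure_le_1 by blast
lemma measure_P_mono: "t \<in> T \<Longrightarrow> measure (P t x) B \<le> measure (P t x) UNIV"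
proof -
  assume t: "t \<in> T"
  interpret subprob_space "P t x" using subprob_P[OF t] .
  show ?thesis using bounded_measure[of B] space_P[OF t] by simp
qed
lemma meas_P[measurable]: "t \<in> T \<Longrightarrow> B \<in> sets borel \<Longrightarrow> (\<lambda>x. measure (P t x) B) \<in> borel_measurable borel"
  by (rule measurable_compose[OF kern measurable_measure_subprob_algebra])
lemma emeas_P[measurable]: "t \<in> T \<Longrightarrow> B \<in> sets borel \<Longrightarrow> (\<lambda>x. emeasure (P t x) B) \<in> borel_measurable borel"
  by (rule measurable_compose[OF kern measurable_emeasure_subprob_algebra])

lemma prob: "prob_space \<pi>" and sets_pi: "sets \<pi> = sets borel"
  using qsd unfolding is_QSD_def by auto
lemma finite_pi: "finite_measure \<pi>" using prob by (simp add: prob_space_def)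
lemma space_pi: "space \<pi> = UNIV" using sets_pi sets_eq_imp_space_eq by fastforce

lemma int_P: "t \<in> T \<Longrightarrow> B \<in> sets borel \<Longrightarrow> integrable \<pi> (\<lambda>x. measure (P t x) B)"
  apply (rule finite_measure.integrable_const_bound[OF finite_pi, where B=1])
  using measure_P_le apply (simp add: AE_I2)
  using meas_P by (simp add: measurable_cong_sets[OF sets_pi refl])

definition g where "g t = Pdist P \<pi> t UNIV"

lemma pdist_eq: "t \<in> T \<Longrightarrow> B \<in> sets borel \<Longrightarrow> Pdist P \<pi> t B = g t * measure \<pi> B"
proof -
  assume t: "t \<in> T" and B: "B \<in> sets borel"
  have h: "Pdist P \<pi> t UNIV > 0 \<and> (\<forall>B\<in>sets borel. Pdist P \<pi> t B / Pdist P \<pi> t UNIV = measure \<pi> B)"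
    using qsd t unfolding is_QSD_def by auto
  hence q: "Pdist P \<pi> t B / Pdist P \<pi> t UNIV = measure \<pi> B" and p: "Pdist P \<pi> t UNIV \<noteq> 0"
    using B by auto
  have "Pdist P \<pi> t B = Pdist P \<pi> t UNIV * (Pdist P \<pi> t B / Pdist P \<pi> t UNIV)" using p by simp
  thus ?thesis unfolding q g_def .
qed
lemma g_pos: "t \<in> T \<Longrightarrow> g t > 0"
  using qsd unfolding is_QSD_def g_def by blast

lemma nn_pdist: "t \<in> T \<Longrightarrow> B \<in> sets borel \<Longrightarrow>
   (\<integral>\<^sup>+x. emeasure (P t x) B \<partial>\<pi>) = ennreal (g t * measure \<pi> B)"
  apply (simp add: emeasure_P pdist_eq[symmetric] Pdist_def)
  apply (rule nn_integral_eq_integral[OF int_P])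
  by auto

lemma bind_eq: assumes t: "t \<in> T" shows "\<pi> \<bind> P t = density \<pi> (\<lambda>_. ennreal (g t))"
proof (rule measure_eqI)
  show "sets (\<pi> \<bind> P t) = sets (density \<pi> (\<lambda>_. ennreal (g t)))"
    using sets_bind[of \<pi> "P t" borel] sets_P[OF t] space_pi sets_pi by simp
  fix B assume "B \<in> sets (\<pi> \<bind> P t)"
  hence B: "B \<in> sets borel"
    using sets_bind[of \<pi> "P t" borel] sets_P[OF t] space_pi by simp
  have "emeasure (\<pi> \<bind> P t) B = (\<integral>\<^sup>+x. emeasure (P t x) B \<partial>\<pi>)"
    apply (rule emeasure_bind) using space_pi kern[OF t] measurable_cong_sets[OF sets_pi refl] B by auto
  also have "\<dots> = ennreal (g t * measure \<pi> B)" using nn_pdist t B by simp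
  also have "\<dots> = emeasure (density \<pi> (\<lambda>_. ennreal (g t))) B"
    using B sets_pi g_pos[OF t] prob
    by (simp add: emeasure_density nn_integral_cmult_indicator finite_measure.emeasure_eq_measure[OF finite_pi] ennreal_mult)
  finally show "emeasure (\<pi> \<bind> P t) B = emeasure (density \<pi> (\<lambda>_. ennreal (g t))) B" .
qed

lemma lemA: assumes t: "t \<in> T" and h: "h \<in> borel_measurable borel"
  shows "(\<integral>\<^sup>+x. \<integral>\<^sup>+y. h y \<partial>P t x \<partial>\<pi>) = ennreal (g t) * (\<integral>\<^sup>+y. h y \<partial>\<pi>)"
proof -
  have "(\<integral>\<^sup>+x. \<integral>\<^sup>+y. h y \<partial>P t x \<partial>\<pi>) = (\<integral>\<^sup>+x. h x \<partial>(\<pi> \<bind> P t))"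
    apply (rule nn_integral_bind[symmetric, OF h])
    using kern[OF t] measurable_cong_sets[OF sets_pi refl] by auto
  also have "\<dots> = ennreal (g t) * (\<integral>\<^sup>+y. h y \<partial>\<pi>)"
  proof -
    have hm: "h \<in> borel_measurable \<pi>" using h by (simp add: measurable_cong_sets[OF sets_pi refl])
    show ?thesis unfolding bind_eq[OF t]
      by (subst nn_integral_density) (use hm in \<open>auto intro: nn_integral_cmult\<close>)
  qed
  finally show ?thesis .
qed

lemma P_semi: "s \<in> T \<Longrightarrow> t \<in> T \<Longrightarrow> B \<in> sets borel \<Longrightarrow>
   emeasure (P (s + t) x) B = (\<integral>\<^sup>+ y. emeasure (P t y) B \<partial>(P s x))"
proof -
  have "\<forall>s\<in>T. \<forall>t\<in>T. \<forall>x. \<forall>B\<in>sets borel.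
        emeasure (P (s + t) x) B = (\<integral>\<^sup>+ y. emeasure (P t y) B \<partial>(P s x))"
    using semigroup unfolding subMarkov_semigroup_def by (elim conjE)
  thus "s \<in> T \<Longrightarrow> t \<in> T \<Longrightarrow> B \<in> sets borel \<Longrightarrow> ?thesis" by simp
qed

lemma g_nn: "t \<in> T \<Longrightarrow> ennreal (g t) = (\<integral>\<^sup>+x. emeasure (P t x) UNIV \<partial>\<pi>)"
  using nn_pdist[of t UNIV] prob_space.prob_space[OF prob] space_pi by simp

lemma g_mult: assumes s: "s \<in> T" and t: "t \<in> T" shows "g (s + t) = g s * g t"
proof -
  have "ennreal (g (s + t)) = (\<integral>\<^sup>+x. \<integral>\<^sup>+ y. emeasure (P t y) UNIV \<partial>(P s x) \<partial>\<pi>)"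
    using g_nn[OF add_T[OF s t]] P_semi[OF s t] by simp
  also have "\<dots> = ennreal (g s) * ennreal (g t)"
    using lemA[OF s emeas_P[OF t]] g_nn[OF t] by simp
  also have "\<dots> = ennreal (g s * g t)"
    using g_pos[OF s] g_pos[OF t] by (simp add: ennreal_mult)
  finally have "ennreal (g (s + t)) = ennreal (g s * g t)" .
  moreover have "0 \<le> g (s+t)" "0 \<le> g s * g t"
    using g_pos s t add_T by (auto intro: less_imp_le)
  ultimately show ?thesis by simp
qed

lemma g_le1: "t \<in> T \<Longrightarrow> g t \<le> 1"
proof -
  assume t: "t \<in> T"
  have "g t = (\<integral>x. measure (P t x) UNIV \<partial>\<pi>)" by (simp add: g_def Pdist_def)
  also have "\<dots> \<le> (\<integral>x. 1 \<partial>\<pi>)"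
    apply (rule integral_mono[OF int_P[OF t] finite_measure.integrable_const[OF finite_pi]])
    using measure_P_le t by auto
  finally show ?thesis using prob_space.prob_space[OF prob] space_pi by simp
qed


lemma g_nat: "g (real n) = g 1 ^ n"
proof (induction n)
  case 0
  have "g 0 = g 0 * g 0" using g_mult[OF zero_T zero_T] by simp
  then show ?case using g_pos[OF zero_T] by simp
next
  case (Suc n)
  have "g (real (Suc n)) = g (real n + 1)" by (simp add: add.commute)
  also have "\<dots> = g (real n) * g 1" using g_mult[OF nat_T one_T] .
  finally show ?case using Suc by simp
qed

lemma g_anti: "s \<in> T \<Longrightarrow> d \<in> T \<Longrightarrow> g (s + d) \<le> g s"
  using g_mult[of s d] g_le1[of d] g_pos[of s]
  by (simp add: mult_left_le)

lemma g_ge_powr: assumes t: "t \<in> T" shows "g 1 powr t \<le> g t"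
proof -
  define l where "l = g 1"
  have l0: "0 < l" and l1: "l \<le> 1" using g_pos[OF one_T] g_le1[OF one_T] by (auto simp: l_def)
  show ?thesis using T_cases
  proof
    assume "T = range real"
    then obtain n where "t = real n" using t by auto
    thus ?thesis using g_nat[of n] powr_realpow[OF l0] by (simp add: l_def)
  next
    assume TT: "T = {0..}"
    have t0: "0 \<le> t" using t TT by auto
    have pw: "g (real k * t) = g t ^ k" for k
    proof (induction k)
      case 0 then show ?case using g_nat[of 0] by simp
    next
      case (Suc k)
      have "g (real (Suc k) * t) = g (real k * t + t)" by (simp add: algebra_simps)
      also have "\<dots> = g (real k * t) * g t" using g_mult TT t0 by simp
      finally show ?case using Suc by simp
    qed
    have bound: "l powr (t + inverse (real (Suc m))) \<le> g t" for m
    proof -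
      define k where "k = Suc m"
      define c where "c = nat \<lceil>real k * t\<rceil>"
      have y0: "0 \<le> real k * t" using t0 by simp
      have ce: "real c = real_of_int \<lceil>real k * t\<rceil>" unfolding c_def using y0 by simp
      have c1: "real k * t \<le> real c" unfolding ce by (rule le_of_int_ceiling)
      have c2: "real c \<le> real k * t + 1" unfolding ce by (rule of_int_ceiling_le_add_one)
      have "l powr (real k * t + 1) \<le> l powr (real c)"
        using powr_mono'[OF c2] l0 l1 by simp
      also have "\<dots> = g (real c)" using powr_realpow[OF l0] g_nat by (simp add: l_def)
      also have "\<dots> \<le> g (real k * t)"
        using g_anti[of "real k * t" "real c - real k * t"] TT c1 t0 by simp
      also have "\<dots> = g t ^ k" by (rule pw)
      finally have "l powr (real k * t + 1) \<le> g t ^ k" .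
      moreover have "(l powr (t + inverse (real k))) ^ k = l powr (real k * t + 1)"
      proof -
        have "(l powr (t + inverse (real k))) ^ k = (l powr (t + inverse (real k))) powr real k"
          using l0 by (simp add: powr_realpow)
        also have "\<dots> = l powr ((t + inverse (real k)) * real k)" by (rule powr_powr)
        also have "(t + inverse (real k)) * real k = real k * t + 1"
          unfolding k_def by (simp add: field_simps)
        finally show ?thesis .
      qed
      ultimately have "(l powr (t + inverse (real k))) ^ Suc m \<le> g t ^ Suc m"
        by (simp add: k_def)
      thus ?thesis using power_le_imp_le_base g_pos[OF t] unfolding k_def
        by (meson less_imp_le)
    qed
    have "(\<lambda>m. l powr (t + inverse (real (Suc m)))) \<longlonglongrightarrow> l powr (t + 0)"
      by (intro tendsto_powr tendsto_const tendsto_add LIMSEQ_inverse_real_of_nat) (use l0 in auto)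
    hence lim: "(\<lambda>m. l powr (t + inverse (real (Suc m)))) \<longlonglongrightarrow> l powr t" by simp
    have "l powr t \<le> g t" by (rule LIMSEQ_le_const2[OF lim]) (use bound in blast)
    thus ?thesis by (simp add: l_def)
  qed
qed


lemma dom_pi:
  assumes nu1_prob: "prob_space \<nu>1" and nu1_sets: "sets \<nu>1 = sets borel"
    and c1_pos: "c1 > 0" and t1_T: "t1 \<in> T"
    and P_t1_pos: "\<forall>x. measure (P t1 x) UNIV > 0"
    and Dobrushin: "\<forall>x. \<forall>B\<in>sets borel.
                      measure (P t1 x) B / measure (P t1 x) UNIV \<ge> c1 * measure \<nu>1 B"
    and E: "E \<in> sets borel"
  shows "c1 * measure \<nu>1 E \<le> measure \<pi> E"
proof -
  have pt: "c1 * measure \<nu>1 E * measure (P t1 x) UNIV \<le> measure (P t1 x) E" for x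
  proof -
    have d: "c1 * measure \<nu>1 E \<le> measure (P t1 x) E / measure (P t1 x) UNIV"
      using Dobrushin E by blast
    show ?thesis using d P_t1_pos[rule_format, of x] by (simp add: pos_le_divide_eq)
  qed
  have "(\<integral>x. c1 * measure \<nu>1 E * measure (P t1 x) UNIV \<partial>\<pi>) \<le> (\<integral>x. measure (P t1 x) E \<partial>\<pi>)"
    by (rule integral_mono[OF integrable_mult_right[OF int_P[OF t1_T]] int_P[OF t1_T E]]) (use pt in auto)
  hence "c1 * measure \<nu>1 E * g t1 \<le> g t1 * measure \<pi> E"
    using pdist_eq[OF t1_T E] by (simp add: Pdist_def g_def)
  thus ?thesis using g_pos[OF t1_T] by (simp add: mult.commute)
qed


lemma keyRD:
  assumes t0: "t0 \<in> T" and c0: "c0 > 0" and A: "A \<in> sets borel" and pA: "measure \<pi> A > 0"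
    and R: "R \<in> borel \<rightarrow>\<^sub>M subprob_algebra borel"
    and eqC: "\<forall>C\<in>sets (borel \<Otimes>\<^sub>M borel).
           (\<integral>\<^sup>+ x. \<integral>\<^sup>+ y. indicator C (x, y) \<partial>(P t0 x) \<partial>\<pi>)
         = (\<integral>\<^sup>+ y. \<integral>\<^sup>+ x. indicator C (x, y) \<partial>(R y) \<partial>\<pi>)"
    and aeR: "AE y in \<pi>. \<forall>B\<in>sets borel.
           measure (R y) B / measure (R y) UNIV \<ge> c0 * measure (uniform_measure \<pi> A) B"
    and B: "B \<in> sets borel"
  shows "measure \<pi> (A \<inter> {x. measure (P t0 x) B < c0 * g t0 * measure \<pi> B / measure \<pi> A}) = 0"
proof (rule ccontr)
  define \<kappa> where "\<kappa> = c0 * g t0 * measure \<pi> B / measure \<pi> A"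
  define D where "D = A \<inter> {x. measure (P t0 x) B < \<kappa>}"
  assume "measure \<pi> (A \<inter> {x. measure (P t0 x) B < c0 * g t0 * measure \<pi> B / measure \<pi> A}) \<noteq> 0"
  hence pD: "measure \<pi> D \<noteq> 0" unfolding D_def \<kappa>_def .
  have Db: "D \<in> sets borel" unfolding D_def using A meas_P[OF t0 B]
    by measurable
  have sR: "sets (R y) = sets borel" for y using subprob_measurableD(2)[OF R] by simp
  have spR: "space (R y) = UNIV" for y using subprob_measurableD(1)[OF R] by simp
  have subR: "subprob_space (R y)" for y using measurable_space[OF R] by (simp add: space_subprob_algebra)
  have eR: "emeasure (R y) E = ennreal (measure (R y) E)" for y E
    using subR by (simp add: subprob_space.emeasure_subprob_space_less_top emeasure_eq_ennreal_measure)
  have RUm: "(\<lambda>y. emeasure (R y) E) \<in> borel_measurable borel" if "E \<in> sets borel" for E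
    by (rule measurable_compose[OF R measurable_emeasure_subprob_algebra[OF that]])
  have spi_m: "\<And>f. f \<in> borel_measurable borel \<Longrightarrow> f \<in> borel_measurable \<pi>"
    by (simp add: measurable_cong_sets[OF sets_pi refl])
  have int1: "integrable \<pi> (\<lambda>x. indicator D x * measure (P t0 x) B)"
    apply (rule finite_measure.integrable_const_bound[OF finite_pi, where B=1])
    using measure_P_le[OF t0] apply (simp add: AE_I2 indicator_def)
    apply (rule spi_m) using Db meas_P[OF t0 B] by measurable
  have inP: "(\<integral>\<^sup>+ y. indicator (E \<times> F) (x, y) \<partial>(P t0 x)) = indicator E x * emeasure (P t0 x) F"
    if "F \<in> sets borel" for E F x
  proof -
    have "(\<integral>\<^sup>+ y. indicator (E \<times> F) (x, y) \<partial>(P t0 x)) = (\<integral>\<^sup>+ y. indicator E x * indicator F y \<partial>(P t0 x))"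
      by (rule nn_integral_cong) (auto simp: indicator_def)
    also have "\<dots> = indicator E x * emeasure (P t0 x) F"
      by (rule nn_integral_cmult_indicator) (use that sets_P[OF t0] in simp)
    finally show ?thesis .
  qed
  have inR: "(\<integral>\<^sup>+ x. indicator (E \<times> F) (x, y) \<partial>(R y)) = indicator F y * emeasure (R y) E"
    if "E \<in> sets borel" for E F y
  proof -
    have "(\<integral>\<^sup>+ x. indicator (E \<times> F) (x, y) \<partial>(R y)) = (\<integral>\<^sup>+ x. indicator F y * indicator E x \<partial>(R y))"
      by (rule nn_integral_cong) (auto simp: indicator_def)
    also have "\<dots> = indicator F y * emeasure (R y) E"
      by (rule nn_integral_cmult_indicator) (use that sR in simp)
    finally show ?thesis .
  qed
  have eq: "(\<integral>\<^sup>+ x. indicator E x * emeasure (P t0 x) F \<partial>\<pi>) = (\<integral>\<^sup>+ y. indicator F y * emeasure (R y) E \<partial>\<pi>)"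
    if "E \<in> sets borel" "F \<in> sets borel" for E F
  proof -
    have "E \<times> F \<in> sets (borel \<Otimes>\<^sub>M borel)" using that by auto
    from eqC[rule_format, OF this] show ?thesis using inP inR that by simp
  qed
  have nu: "measure (uniform_measure \<pi> A) D = measure \<pi> D / measure \<pi> A"
  proof -
    have "emeasure \<pi> A \<noteq> 0" "emeasure \<pi> A \<noteq> \<infinity>" using pA finite_measure.emeasure_eq_measure[OF finite_pi]
      by auto
    moreover have "D \<in> sets \<pi>" using Db sets_pi by simp
    ultimately show ?thesis by (simp add: D_def Int_absorb1)
  qed
  have pt: "AE y in \<pi>. indicator B y * ennreal (c0 * measure (uniform_measure \<pi> A) D * measure (R y) UNIV)
                \<le> indicator B y * emeasure (R y) D"
    using aeR
  proof eventually_elim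
    case (elim y)
    hence h: "c0 * measure (uniform_measure \<pi> A) D \<le> measure (R y) D / measure (R y) UNIV"
      using Db by blast
    have "c0 * measure (uniform_measure \<pi> A) D * measure (R y) UNIV \<le> measure (R y) D"
    proof (cases "measure (R y) UNIV = 0")
      case True
      interpret subprob_space "R y" using subR .
      have "measure (R y) D = 0"
        using bounded_measure[of D] spR[of y] True measure_nonneg[of "R y" D] by simp
      thus ?thesis using True by simp
    next
      case False
      hence "measure (R y) UNIV > 0" by (simp add: less_le)
      thus ?thesis using h by (simp add: pos_le_divide_eq)
    qed
    thus ?case using eR by (auto intro: mult_left_mono simp: indicator_def)
  qed
  have "ennreal (\<kappa> * measure \<pi> D) = ennreal (c0 * measure (uniform_measure \<pi> A) D) * ennreal (g t0 * measure \<pi> B)"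
    unfolding nu \<kappa>_def using c0 g_pos[OF t0] pA by (simp add: ennreal_mult[symmetric] field_simps)
  also have "\<dots> = ennreal (c0 * measure (uniform_measure \<pi> A) D) * (\<integral>\<^sup>+ x. indicator UNIV x * emeasure (P t0 x) B \<partial>\<pi>)"
    using nn_pdist[OF t0 B] by simp
  also have "\<dots> = ennreal (c0 * measure (uniform_measure \<pi> A) D) * (\<integral>\<^sup>+ y. indicator B y * emeasure (R y) UNIV \<partial>\<pi>)"
    using eq[OF _ B, of UNIV] by simp
  also have "\<dots> = (\<integral>\<^sup>+ y. indicator B y * ennreal (c0 * measure (uniform_measure \<pi> A) D * measure (R y) UNIV) \<partial>\<pi>)"
    apply (subst nn_integral_cmult[symmetric])
     apply (rule spi_m) using B RUm apply measurable
    apply (rule nn_integral_cong)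
    using eR c0 by (auto simp: ennreal_mult indicator_def mult_ac)
  also have "\<dots> \<le> (\<integral>\<^sup>+ y. indicator B y * emeasure (R y) D \<partial>\<pi>)"
    by (rule nn_integral_mono_AE[OF pt])
  also have "\<dots> = (\<integral>\<^sup>+ x. indicator D x * emeasure (P t0 x) B \<partial>\<pi>)"
    using eq[OF Db B] by simp
  also have "\<dots> = (\<integral>\<^sup>+ x. ennreal (indicator D x * measure (P t0 x) B) \<partial>\<pi>)"
    using emeasure_P[OF t0] by (intro nn_integral_cong) (simp add: indicator_def)
  also have "\<dots> = ennreal (\<integral> x. indicator D x * measure (P t0 x) B \<partial>\<pi>)"
    by (rule nn_integral_eq_integral[OF int1]) auto
  finally have le: "ennreal (\<kappa> * measure \<pi> D) \<le> ennreal (\<integral> x. indicator D x * measure (P t0 x) B \<partial>\<pi>)" .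
  have int2: "integrable \<pi> (\<lambda>x. indicator D x * \<kappa>)"
    using Db sets_pi finite_measure.emeasure_eq_measure[OF finite_pi] by simp
  have "(\<integral> x. indicator D x * measure (P t0 x) B \<partial>\<pi>) < (\<integral> x. indicator D x * \<kappa> \<partial>\<pi>)"
  proof (rule finite_measure.integral_less_AE[OF finite_pi int1 int2, of D])
    show "emeasure \<pi> D \<noteq> 0"
    proof
      assume "emeasure \<pi> D = 0"
      thus False using pD by (simp add: measure_def)
    qed
    show "D \<in> sets \<pi>" using Db sets_pi by simp
    show "AE x in \<pi>. x \<in> D \<longrightarrow> indicator D x * measure (P t0 x) B \<noteq> indicator D x * \<kappa>"
      by (auto simp: D_def)
    show "AE x in \<pi>. indicator D x * measure (P t0 x) B \<le> indicator D x * \<kappa>"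
      by (auto simp: D_def indicator_def)
  qed
  also have "\<dots> = \<kappa> * measure \<pi> D" using Db sets_pi by (simp add: mult.commute)
  finally have lt: "(\<integral> x. indicator D x * measure (P t0 x) B \<partial>\<pi>) < \<kappa> * measure \<pi> D" .
  have nn: "0 \<le> (\<integral> x. indicator D x * measure (P t0 x) B \<partial>\<pi>)"
    by (rule integral_nonneg_AE) auto
  from le have "\<kappa> * measure \<pi> D \<le> (\<integral> x. indicator D x * measure (P t0 x) B \<partial>\<pi>)"
    using nn by (simp add: ennreal_le_iff)
  thus False using lt by simp
qed


lemma main_loc:
  fixes \<nu>1 :: "'a measure" and A :: "'a set" and c0 c1 t0 t1 :: real
  assumes A_borel: "A \<in> sets borel"
    and nu1_prob: "prob_space \<nu>1" and nu1_sets: "sets \<nu>1 = sets borel"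
    and nu1_A: "measure \<nu>1 (UNIV - A) = 0"
    and c1_pos: "c1 > 0" and t1_T: "t1 \<in> T" and t1_pos: "t1 > 0"
    and P_t1_pos: "\<forall>x. measure (P t1 x) UNIV > 0"
    and Dobrushin: "\<forall>x. \<forall>B\<in>sets borel.
                      measure (P t1 x) B / measure (P t1 x) UNIV \<ge> c1 * measure \<nu>1 B"
    and RD: "reverse_Dobrushin T P \<pi> t0 c0 (uniform_measure \<pi> A)"
  shows "\<forall>x. \<forall>B\<in>sets borel.
           measure (P (t0 + t1) x) B / measure (P (t0 + t1) x) UNIV
             \<ge> (surv_rate P \<pi> powr t0 * c0 * c1 / measure \<pi> A) * measure \<pi> B"
proof (intro allI ballI)
  fix x B assume B: "B \<in> sets (borel :: 'a measure)"
  from RD have t0: "t0 \<in> T" and c0: "c0 > 0" unfolding reverse_Dobrushin_def by auto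
  from RD obtain R where R: "R \<in> borel \<rightarrow>\<^sub>M subprob_algebra borel"
    and eqC: "\<forall>C\<in>sets (borel \<Otimes>\<^sub>M borel).
           (\<integral>\<^sup>+ x. \<integral>\<^sup>+ y. indicator C (x, y) \<partial>(P t0 x) \<partial>\<pi>)
         = (\<integral>\<^sup>+ y. \<integral>\<^sup>+ x. indicator C (x, y) \<partial>(R y) \<partial>\<pi>)"
    and aeR: "AE y in \<pi>. \<forall>B\<in>sets borel.
           measure (R y) B / measure (R y) UNIV \<ge> c0 * measure (uniform_measure \<pi> A) B"
    unfolding reverse_Dobrushin_def by blast
  have sp1: "space \<nu>1 = UNIV" using nu1_sets sets_eq_imp_space_eq by fastforce
  have compl: "measure \<nu>1 E = 1 - measure \<nu>1 (UNIV - E)" if "E \<in> sets borel" for E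
    using prob_space.prob_compl[OF nu1_prob, of E] that nu1_sets sp1 by simp
  have nA: "measure \<nu>1 A = 1" using compl[OF A_borel] nu1_A by simp
  have pA: "measure \<pi> A > 0"
    using dom_pi[OF nu1_prob nu1_sets c1_pos t1_T P_t1_pos Dobrushin A_borel] nA c1_pos by simp
  define \<kappa> where "\<kappa> = c0 * g t0 * measure \<pi> B / measure \<pi> A"
  have k0: "0 \<le> \<kappa>" unfolding \<kappa>_def using c0 g_pos[OF t0] pA by simp
  define G where "G = {y. \<kappa> \<le> measure (P t0 y) B}"
  have Gb: "G \<in> sets borel" unfolding G_def using meas_P[OF t0 B] by measurable
  define N where "N = A \<inter> {x. measure (P t0 x) B < \<kappa>}"
  have Nb: "N \<in> sets borel" unfolding N_def using A_borel meas_P[OF t0 B] by measurable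
  have piN: "measure \<pi> N = 0"
    using keyRD[OF t0 c0 A_borel pA R eqC aeR B] unfolding N_def \<kappa>_def .
  have "c1 * measure \<nu>1 N \<le> 0"
    using dom_pi[OF nu1_prob nu1_sets c1_pos t1_T P_t1_pos Dobrushin Nb] piN by simp
  hence nuN: "measure \<nu>1 N = 0" using c1_pos by (simp add: mult_le_0_iff measure_nonneg antisym)
  have "measure \<nu>1 (UNIV - G) \<le> measure \<nu>1 (N \<union> (UNIV - A))"
    apply (rule finite_measure.finite_measure_mono[OF prob_space.finite_measure[OF nu1_prob]])
     apply (force simp: G_def N_def)
    using Nb A_borel nu1_sets by auto
  also have "\<dots> \<le> measure \<nu>1 N + measure \<nu>1 (UNIV - A)"
    apply (rule measure_Un_le)
    using Nb A_borel nu1_sets by auto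
  finally have "measure \<nu>1 (UNIV - G) = 0" using nuN nu1_A by (simp add: antisym)
  hence nG: "measure \<nu>1 G = 1" using compl[OF Gb] by simp
  define m where "m = measure (P t1 x) UNIV"
  have m0: "m > 0" using P_t1_pos by (simp add: m_def)
  have PG: "c1 * m \<le> measure (P t1 x) G"
    using Dobrushin[rule_format, OF Gb, of x] nG m0 by (simp add: m_def pos_le_divide_eq)
  have tt: "t0 + t1 = t1 + t0" by simp
  have "ennreal (\<kappa> * measure (P t1 x) G) = (\<integral>\<^sup>+ y. ennreal \<kappa> * indicator G y \<partial>P t1 x)"
    using Gb sets_P[OF t1_T] emeasure_P[OF t1_T] k0
    by (simp add: nn_integral_cmult_indicator ennreal_mult)
  also have "\<dots> \<le> (\<integral>\<^sup>+ y. emeasure (P t0 y) B \<partial>P t1 x)"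
    apply (rule nn_integral_mono)
    using emeasure_P[OF t0] by (auto simp: G_def indicator_def)
  also have "\<dots> = emeasure (P (t0 + t1) x) B"
    unfolding tt using P_semi[OF t1_T t0 B] by simp
  also have "\<dots> = ennreal (measure (P (t0 + t1) x) B)" using emeasure_P add_T[OF t0 t1_T] by simp
  finally have num: "\<kappa> * measure (P t1 x) G \<le> measure (P (t0 + t1) x) B"
    by (simp add: ennreal_le_iff measure_nonneg)
  have "ennreal (measure (P (t0 + t1) x) UNIV) = emeasure (P (t0 + t1) x) UNIV"
    using emeasure_P add_T[OF t0 t1_T] by simp
  also have "\<dots> = (\<integral>\<^sup>+ y. emeasure (P t0 y) UNIV \<partial>P t1 x)"
    unfolding tt using P_semi[OF t1_T t0] by simp
  also have "\<dots> \<le> (\<integral>\<^sup>+ y. 1 \<partial>P t1 x)"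
    apply (rule nn_integral_mono)
    using emeasure_P[OF t0] measure_P_le[OF t0] by simp
  also have "\<dots> = ennreal m" using space_P[OF t1_T] emeasure_P[OF t1_T] by (simp add: m_def)
  finally have den: "measure (P (t0 + t1) x) UNIV \<le> m"
    by (simp add: ennreal_le_iff less_imp_le[OF m0])
  have num2: "\<kappa> * c1 * m \<le> measure (P (t0 + t1) x) B"
    using num PG k0 by (metis mult.assoc mult_left_mono order_trans)
  have K: "(surv_rate P \<pi> powr t0 * c0 * c1 / measure \<pi> A) * measure \<pi> B \<le> \<kappa> * c1"
  proof -
    have "surv_rate P \<pi> = g 1" by (simp add: surv_rate_def g_def)
    hence "surv_rate P \<pi> powr t0 \<le> g t0" using g_ge_powr[OF t0] by simp
    hence "surv_rate P \<pi> powr t0 * (c0 * c1 * measure \<pi> B / measure \<pi> A) \<le> g t0 * (c0 * c1 * measure \<pi> B / measure \<pi> A)"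
      using c0 c1_pos pA by (intro mult_right_mono) auto
    thus ?thesis unfolding \<kappa>_def by (simp add: field_simps)
  qed
  have nB: "measure (P (t0 + t1) x) B \<le> measure (P (t0 + t1) x) UNIV"
    using measure_P_mono add_T[OF t0 t1_T] by blast
  show "(surv_rate P \<pi> powr t0 * c0 * c1 / measure \<pi> A) * measure \<pi> B
        \<le> measure (P (t0 + t1) x) B / measure (P (t0 + t1) x) UNIV"
  proof (cases "measure (P (t0 + t1) x) UNIV = 0")
    case True
    hence "\<kappa> * c1 * m \<le> 0" using num2 nB by simp
    hence "\<kappa> * c1 \<le> 0" using m0 by (simp add: mult_le_0_iff)
    thus ?thesis using K True by simp
  next
    case False
    hence dp: "measure (P (t0 + t1) x) UNIV > 0" by (simp add: less_le)
    have "\<kappa> * c1 * measure (P (t0 + t1) x) UNIV \<le> \<kappa> * c1 * m"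
      using den k0 c1_pos by (intro mult_left_mono) auto
    hence "\<kappa> * c1 \<le> measure (P (t0 + t1) x) B / measure (P (t0 + t1) x) UNIV"
      using num2 dp by (simp add: pos_le_divide_eq)
    thus ?thesis using K by linarith
  qed
qed

end

theorem mainTheorem4:
  fixes T :: "real set" and P :: "real \<Rightarrow> 'a::metric_space \<Rightarrow> 'a measure"
    and \<pi> \<nu>1 :: "'a measure" and A :: "'a set" and c0 c1 t0 t1 :: real
  assumes semigroup: "subMarkov_semigroup T P"
    and qsd: "is_QSD T P \<pi>"
    and A_borel: "A \<in> sets borel"
    and nu1_prob: "prob_space \<nu>1" and nu1_sets: "sets \<nu>1 = sets borel"
    and nu1_A: "measure \<nu>1 (UNIV - A) = 0"
    and c1_pos: "c1 > 0" and t1_T: "t1 \<in> T" and t1_pos: "t1 > 0"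
    and P_t1_pos: "\<forall>x. measure (P t1 x) UNIV > 0"
    and Dobrushin: "\<forall>x. \<forall>B\<in>sets borel.
                      measure (P t1 x) B / measure (P t1 x) UNIV \<ge> c1 * measure \<nu>1 B"
    and RD: "reverse_Dobrushin T P \<pi> t0 c0 (uniform_measure \<pi> A)"
  shows "\<forall>x. \<forall>B\<in>sets borel.
           measure (P (t0 + t1) x) B / measure (P (t0 + t1) x) UNIV
             \<ge> (surv_rate P \<pi> powr t0 * c0 * c1 / measure \<pi> A) * measure \<pi> B"
  using qs.main_loc[OF qs.intro[OF semigroup qsd] A_borel nu1_prob nu1_sets nu1_A c1_pos t1_T t1_pos
      P_t1_pos Dobrushin RD] .

end
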